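(* Fix $T>0$ and a continuous $h>0$ on $[0,T]$, and assume that for every boundary function $s$ on $[0,T]$ the Fixed Boundary Neumann Problem with flux $h$ has a solution $U^s$. Let $\mathcal{R}$ be the Neumann boundary-update operator and $\mathcal{P}^{1/2}(s)=\tfrac12\mathcal{R}(s)+\tfrac12 s$. Let $s^*$ be a boundary function with $\mathcal{R}(s^* )=s^*$ (i.e. $s^*$ is the free boundary of the solution of the Stefan problem with this Neumann condition). If $s$ is a boundary function with $s(t)\le s^*(t)$ for all $t\in[0,T]$, then for all $t\in[0,T]$ $$s-s^*\le \frac{s-s^*}{2}\le \mathcal{P}^{1/2}(s)-s^*\le \frac{\mathcal{R}(s)-s^*}{2}\le \mathcal{R}(s)-s^*.$$ If instead $s(t)\ge s^*(t)$ for all $t\in[0,T]$, then for all $t\in[0,T]$ $$s-s^*\ge \frac{s-s^*}{2}\ge \mathcal{P}^{1/2}(s)-s^*\ge \frac{\mathcal{R}(s)-s^*}{2}\ge \mathcal{R}(s)-s^*.$$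
   Context: A boundary function on $[0,T]$ is a function $s\in C([0,T])\cap C^1((0,T])$ with $s(0)=0$ and $s(t)>0$ for $t\in(0,T]$. For such $s$ let $Q_{s,T}=\{(x,t):0<x<s(t),\,0<t<T\}$. The Fixed Boundary Neumann Problem on $s$ with flux $h$ asks for $U\in C(\overline{Q_{s,T}})\cap C^{2,1}(Q_{s,T})$ with $U_x$ continuous on $\overline{Q_{s,T}}\setminus\{t=0\}$ such that $U_t=U_{xx}$ in $Q_{s,T}$, $U(0,0)=0$, $U(s(t),t)=0$, and $-U_x(0,t)=h(t)$; its solution is $U^s$. The Neumann boundary-update operator is $\mathcal{R}(s)(t)=\int_0^t h(z)\,dz-\int_0^{s(t)}U^s(x,t)\,dx$ for $0\le t\le T$. *)

theory Defs
  imports "HOL-Analysis.Analysis"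
begin

definition boundary_fn :: "real \<Rightarrow> (real \<Rightarrow> real) \<Rightarrow> bool" where
  "boundary_fn T s \<longleftrightarrow>
     continuous_on {0..T} s \<and>
     (\<exists>s'. (\<forall>t\<in>{0<..T}. (s has_real_derivative s' t) (at t within {0<..T}))
           \<and> continuous_on {0<..T} s') \<and>
     s 0 = 0 \<and> (\<forall>t\<in>{0<..T}. s t > 0)"

definition Qdom :: "real \<Rightarrow> (real \<Rightarrow> real) \<Rightarrow> (real \<times> real) set" where
  "Qdom T s = {(x,t). 0 < t \<and> t < T \<and> 0 < x \<and> x < s t}"

definition Qclos :: "real \<Rightarrow> (real \<Rightarrow> real) \<Rightarrow> (real \<times> real) set" where
  "Qclos T s = {(x,t). 0 \<le> t \<and> t \<le> T \<and> 0 \<le> x \<and> x \<le> s t}"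

definition neumann_sol :: "real \<Rightarrow> (real \<Rightarrow> real) \<Rightarrow> (real \<Rightarrow> real) \<Rightarrow> (real \<Rightarrow> real \<Rightarrow> real) \<Rightarrow> bool" where
  "neumann_sol T h s U \<longleftrightarrow>
     continuous_on (Qclos T s) (\<lambda>(x,t). U x t) \<and>
     (\<exists>Ux Uxx Ut.
        (\<forall>(x,t)\<in>Qdom T s.
            ((\<lambda>y. U y t) has_real_derivative Ux x t) (at x) \<and>
            ((\<lambda>y. Ux y t) has_real_derivative Uxx x t) (at x) \<and>
            ((\<lambda>\<tau>. U x \<tau>) has_real_derivative Ut x t) (at t) \<and>
            Ut x t = Uxx x t) \<and>
        continuous_on (Qdom T s) (\<lambda>(x,t). Uxx x t) \<and>
        continuous_on (Qdom T s) (\<lambda>(x,t). Ut x t) \<and>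
        (\<forall>(x,t)\<in>Qclos T s - {(x,t). t = 0}.
            ((\<lambda>y. U y t) has_real_derivative Ux x t) (at x within {0..s t})) \<and>
        continuous_on (Qclos T s - {(x,t). t = 0}) (\<lambda>(x,t). Ux x t) \<and>
        (\<forall>t\<in>{0<..T}. - Ux 0 t = h t)) \<and>
     U 0 0 = 0 \<and>
     (\<forall>t\<in>{0..T}. U (s t) t = 0)"

text \<open>Neumann boundary-update operator, given the choice U s = U^s of solutions.\<close>
definition nbu :: "(real \<Rightarrow> real) \<Rightarrow> ((real \<Rightarrow> real) \<Rightarrow> real \<Rightarrow> real \<Rightarrow> real)
                   \<Rightarrow> (real \<Rightarrow> real) \<Rightarrow> real \<Rightarrow> real" where
  "nbu h U s t = integral {0..t} h - integral {0..s t} (\<lambda>x. U s x t)"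

end

theory Submission
  imports Defs
begin

lemma compactK:
  fixes r :: "real \<Rightarrow> real"
  assumes "0 \<le> t0" "t0 \<le> T" "continuous_on {0..T} r" "\<forall>t\<in>{0..T}. r t \<ge> 0"
  shows "compact {(x,t). 0 \<le> t \<and> t \<le> t0 \<and> 0 \<le> x \<and> x \<le> r t}"
proof -
  let ?g = "\<lambda>p::real\<times>real. (fst p * r (snd p), snd p)"
  have rc: "continuous_on {0..t0} r" using assms(2,3) continuous_on_subset by fastforce
  have "continuous_on ({0..1} \<times> {0..t0}) ?g"
    apply (intro continuous_intros)
    apply (rule continuous_on_compose2[OF rc continuous_on_snd]) by auto
  then have c: "compact (?g ` ({0..1} \<times> {0..t0}))"
    by (intro compact_continuous_image compact_Times) auto
  have "?g ` ({0..1} \<times> {0..t0}) = {(x,t). 0 \<le> t \<and> t \<le> t0 \<and> 0 \<le> x \<and> x \<le> r t}"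
  proof (intro equalityI subsetI)
    fix p assume "p \<in> ?g ` ({0..1::real} \<times> {0..t0})"
    then obtain a t where h: "a \<in> {0..1}" "t \<in> {0..t0}" and p: "p = ?g (a,t)" by auto
    then have "r t \<ge> 0" using assms by auto
    with h p show "p \<in> {(x,t). 0 \<le> t \<and> t \<le> t0 \<and> 0 \<le> x \<and> x \<le> r t}"
      by (auto simp: mult_left_le_one_le)
  next
    fix p assume "p \<in> {(x,t). 0 \<le> t \<and> t \<le> t0 \<and> 0 \<le> x \<and> x \<le> r t}"
    then obtain x t where h: "0 \<le> t" "t \<le> t0" "0 \<le> x" "x \<le> r t" and p: "p = (x,t)" by auto
    show "p \<in> ?g ` ({0..1} \<times> {0..t0})"
    proof (cases "r t = 0")
      case True then show ?thesis using h p by (intro image_eqI[where x="(0,t)"]) auto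
    next
      case False then have "r t > 0" using h by auto
      then show ?thesis using h p by (intro image_eqI[where x="(x / r t,t)"]) auto
    qed
  qed
  with c show ?thesis by simp
qed
lemma minstep:
  fixes T t0 \<delta> :: real and r :: "real \<Rightarrow> real" and V Vx Vxx Vt :: "real \<Rightarrow> real \<Rightarrow> real" and D :: "real \<Rightarrow> real"
  assumes t0: "0 \<le> t0" "t0 < T" and dl: "\<delta> > 0"
  and rc: "continuous_on {0..T} r" and r0: "r 0 = 0" and rpos: "\<forall>t\<in>{0<..T}. r t > 0"
  and Vc: "continuous_on (Qclos T r) (\<lambda>(x,t). V x t)"
  and pde: "\<forall>(x,t)\<in>Qdom T r. ((\<lambda>y. V y t) has_real_derivative Vx x t) (at x) \<and>
              ((\<lambda>y. Vx y t) has_real_derivative Vxx x t) (at x) \<and>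
              ((\<lambda>\<tau>. V x \<tau>) has_real_derivative Vt x t) (at t) \<and> Vt x t = Vxx x t"
  and bd0: "\<forall>t\<in>{0<..T}. ((\<lambda>y. V y t) has_real_derivative D t) (at 0 within {0..r t}) \<and> D t < 0"
  and lat: "\<forall>t\<in>{0..T}. V (r t) t \<ge> 0"
  and c00: "V 0 0 \<ge> 0"
  and x: "0 \<le> x" "x \<le> r t0"
  shows "V x t0 + \<delta> * t0 \<ge> 0"
proof -
  define K where "K = {(x,t). 0 \<le> t \<and> t \<le> t0 \<and> 0 \<le> x \<and> x \<le> r t}"
  have rnn: "\<forall>t\<in>{0..T}. r t \<ge> 0" using r0 rpos by (metis atLeastAtMost_iff greaterThanAtMost_iff less_eq_real_def)
  have cK: "compact K" unfolding K_def using compactK[OF t0(1) _ rc rnn] t0 by simp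
  have KQ: "K \<subseteq> Qclos T r" using t0 unfolding K_def Qclos_def by auto
  define f where "f = (\<lambda>p::real\<times>real. V (fst p) (snd p) + \<delta> * snd p)"
  have fc: "continuous_on K f" unfolding f_def
    apply (intro continuous_intros)
    using continuous_on_subset[OF Vc KQ] by (simp add: case_prod_beta)
  have "(0,0) \<in> K" unfolding K_def using t0 r0 by auto
  then obtain p where pK: "p \<in> K" and pmin: "\<forall>q\<in>K. f p \<le> f q"
    using continuous_attains_inf[OF cK _ fc] by blast
  obtain xm tm where p: "p = (xm,tm)" by (cases p)
  have mK: "0 \<le> tm" "tm \<le> t0" "0 \<le> xm" "xm \<le> r tm" using pK p K_def by auto
  have mmin: "\<And>y \<tau>. 0 \<le> \<tau> \<Longrightarrow> \<tau> \<le> t0 \<Longrightarrow> 0 \<le> y \<Longrightarrow> y \<le> r \<tau> \<Longrightarrow> V xm tm + \<delta> * tm \<le> V y \<tau> + \<delta> * \<tau>"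
    using pmin p unfolding K_def f_def by auto
  have fp: "f p \<ge> 0"
  proof (cases "tm = 0")
    case True
    then have "xm = 0" using mK r0 by auto
    then show ?thesis using True c00 p f_def by simp
  next
    case tpos: False
    then have tpos: "tm > 0" using mK by auto
    have tmT: "tm \<in> {0<..T}" using tpos mK t0 by auto
    show ?thesis
    proof (cases "xm = r tm")
      case True
      then show ?thesis using lat tmT mK dl p f_def by simp
    next
      case False
      then have xlt: "xm < r tm" using mK by auto
      show ?thesis
      proof (cases "xm = 0")
        case True
        obtain d where d: "d > 0" "\<forall>h>0. 0 + h \<in> {0..r tm} \<longrightarrow> h < d \<longrightarrow> V 0 tm > V (0 + h) tm"
          using has_real_derivative_neg_dec_right[of "\<lambda>y. V y tm" "D tm" 0 "{0..r tm}"] bd0 tmT by blast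
        define h where "h = min d (r tm) / 2"
        have h: "h > 0" "h < d" "h \<le> r tm" using d xlt True unfolding h_def by auto
        then have "V 0 tm > V h tm" using d by auto
        moreover have "V xm tm + \<delta> * tm \<le> V h tm + \<delta> * tm" using mmin[of tm h] mK h by auto
        ultimately show ?thesis using True by simp
      next
        case False
        then have xpos: "xm > 0" using mK by auto
        have inQ: "\<And>y. 0 < y \<Longrightarrow> y < r tm \<Longrightarrow> (y,tm) \<in> Qdom T r" using tpos mK t0 unfolding Qdom_def by auto
        have dm: "((\<lambda>y. V y tm) has_real_derivative Vx xm tm) (at xm)"
          "((\<lambda>y. Vx y tm) has_real_derivative Vxx xm tm) (at xm)"
          "((\<lambda>\<tau>. V xm \<tau>) has_real_derivative Vt xm tm) (at tm)" "Vt xm tm = Vxx xm tm"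
          using pde inQ[OF xpos xlt] by auto
        have Vt: "Vt xm tm + \<delta> \<le> 0"
        proof (rule ccontr)
          assume "\<not> ?thesis"
          then have pos: "Vt xm tm + \<delta> > 0" by simp
          have dg: "((\<lambda>\<tau>. V xm \<tau> + \<delta> * \<tau>) has_real_derivative Vt xm tm + \<delta>) (at tm)"
            using dm(3) by (auto intro!: derivative_eq_intros)
          obtain d where d: "d > 0" "\<forall>h>0. tm - h \<in> UNIV \<longrightarrow> h < d \<longrightarrow> V xm (tm - h) + \<delta> * (tm - h) < V xm tm + \<delta> * tm"
            using has_real_derivative_pos_inc_left[OF dg pos] by blast
          have "continuous (at tm within {0..T}) r" using rc mK t0 unfolding continuous_on_eq_continuous_within by auto
          then obtain e where e: "e > 0" "\<forall>\<tau>\<in>{0..T}. dist \<tau> tm < e \<longrightarrow> dist (r \<tau>) (r tm) < r tm - xm"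
            using xlt unfolding continuous_within_eps_delta by (metis diff_gt_0_iff_gt)
          define h where "h = min d (min e tm) / 2"
          have h: "h > 0" "h < d" "h < e" "h < tm" using d e tpos unfolding h_def by auto
          then have "dist (tm - h) tm < e" by (simp add: dist_real_def)
          then have "dist (r (tm - h)) (r tm) < r tm - xm" using e h mK t0 by auto
          then have "xm \<le> r (tm - h)" by (auto simp: dist_real_def)
          then have "V xm tm + \<delta> * tm \<le> V xm (tm - h) + \<delta> * (tm - h)" using mmin[of "tm - h" xm] h mK by auto
          then show False using d h by force
        qed
        have Vx0: "Vx xm tm = 0"
        proof (rule DERIV_local_min[OF dm(1)])
          show "0 < min xm (r tm - xm)" using xpos xlt by auto
          show "\<forall>y. \<bar>xm - y\<bar> < min xm (r tm - xm) \<longrightarrow> V xm tm \<le> V y tm"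
            using mmin[of tm] mK by auto
        qed
        have Vxx: "Vxx xm tm \<ge> 0"
        proof (rule ccontr)
          assume "\<not> ?thesis"
          then have neg: "Vxx xm tm < 0" by simp
          obtain d where d: "d > 0" "\<forall>h>0. xm + h \<in> UNIV \<longrightarrow> h < d \<longrightarrow> Vx xm tm > Vx (xm + h) tm"
            using has_real_derivative_neg_dec_right[OF dm(2) neg] by blast
          define h where "h = min d (r tm - xm) / 2"
          have h: "h > 0" "h < d" "xm + h < r tm" using d(1) xlt unfolding h_def by (auto simp: min_def field_simps)
          have "\<exists>z. xm < z \<and> z < xm + h \<and> V (xm + h) tm - V xm tm = (xm + h - xm) * Vx z tm"
            apply (rule MVT2) using h apply simp
            using pde inQ xpos h by fastforce
          then obtain z where z: "xm < z" "z < xm + h" "V (xm + h) tm - V xm tm = h * Vx z tm" by auto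
          have "Vx z tm < 0" using d(2)[rule_format, of "z - xm"] z h Vx0 by auto
          then have "h * Vx z tm < 0" using h(1) by (simp add: mult_pos_neg)
          then have "V (xm + h) tm < V xm tm" using z(3) by linarith
          moreover have "V xm tm \<le> V (xm + h) tm" using mmin[of tm "xm + h"] mK h by auto
          ultimately show False by simp
        qed
        show ?thesis using Vt Vxx dm(4) dl by simp
      qed
    qed
  qed
  have "(x,t0) \<in> K" using x t0 K_def by auto
  then show ?thesis using pmin fp f_def by force
qed
lemma minprin:
  fixes T :: real and r :: "real \<Rightarrow> real" and V Vx Vxx Vt :: "real \<Rightarrow> real \<Rightarrow> real" and D :: "real \<Rightarrow> real"
  assumes T: "T > 0"
  and rc: "continuous_on {0..T} r" and r0: "r 0 = 0" and rpos: "\<forall>t\<in>{0<..T}. r t > 0"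
  and Vc: "continuous_on (Qclos T r) (\<lambda>(x,t). V x t)"
  and pde: "\<forall>(x,t)\<in>Qdom T r. ((\<lambda>y. V y t) has_real_derivative Vx x t) (at x) \<and>
              ((\<lambda>y. Vx y t) has_real_derivative Vxx x t) (at x) \<and>
              ((\<lambda>\<tau>. V x \<tau>) has_real_derivative Vt x t) (at t) \<and> Vt x t = Vxx x t"
  and bd0: "\<forall>t\<in>{0<..T}. ((\<lambda>y. V y t) has_real_derivative D t) (at 0 within {0..r t}) \<and> D t < 0"
  and lat: "\<forall>t\<in>{0..T}. V (r t) t \<ge> 0"
  and c00: "V 0 0 \<ge> 0"
  shows "\<forall>x t. 0 \<le> t \<and> t \<le> T \<and> 0 \<le> x \<and> x \<le> r t \<longrightarrow> V x t \<ge> 0"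
proof -
  have A: "V x t \<ge> 0" if h: "0 \<le> t" "t < T" "0 \<le> x" "x \<le> r t" for x t
  proof (rule ccontr)
    assume "\<not> ?thesis"
    then have neg: "V x t < 0" by simp
    define \<delta> where "\<delta> = - V x t / (2 * (t + 1))"
    have dpos: "\<delta> > 0" using neg h unfolding \<delta>_def by (simp add: divide_neg_pos)
    have "V x t + \<delta> * t \<ge> 0"
      by (rule minstep[OF h(1,2) dpos rc r0 rpos Vc pde bd0 lat c00 h(3,4)])
    moreover have "\<delta> * t < - V x t"
    proof -
      have "\<delta> * t = - V x t * (t / (2 * (t+1)))" unfolding \<delta>_def by simp
      also have "\<dots> < - V x t * 1"
        apply (rule mult_strict_left_mono) using neg h by (auto simp: field_simps)
      finally show ?thesis by simp
    qed
    ultimately show False by simp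
  qed
  show ?thesis
  proof (intro allI impI)
    fix x t assume h: "0 \<le> t \<and> t \<le> T \<and> 0 \<le> x \<and> x \<le> r t"
    show "V x t \<ge> 0"
    proof (cases "t < T")
      case True then show ?thesis using A h by auto
    next
      case False
      then have tT: "t = T" using h by auto
      show ?thesis
      proof (cases "x = r T")
        case True then show ?thesis using lat tT T by auto
      next
        case False
        then have xlt: "x < r T" using h tT by auto
        show ?thesis
        proof (rule ccontr)
          assume "\<not> ?thesis"
          then have neg: "V x T < 0" using tT by simp
          have "continuous (at T within {0..T}) r" using rc T unfolding continuous_on_eq_continuous_within by auto
          then obtain e where e: "e > 0" "\<forall>\<tau>\<in>{0..T}. dist \<tau> T < e \<longrightarrow> dist (r \<tau>) (r T) < r T - x"
            using xlt unfolding continuous_within_eps_delta by (metis diff_gt_0_iff_gt)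
          have xT: "(x,T) \<in> Qclos T r" using h tT T unfolding Qclos_def by auto
          obtain e2 where e2: "e2 > 0" "\<forall>q\<in>Qclos T r. dist q (x,T) < e2 \<longrightarrow> dist ((\<lambda>(x,t). V x t) q) ((\<lambda>(x,t). V x t) (x,T)) < - V x T"
            using Vc xT neg unfolding continuous_on_iff by (metis neg_0_less_iff_less)
          define \<tau> where "\<tau> = T - min e (min e2 T) / 2"
          have tau: "0 \<le> \<tau>" "\<tau> < T" "dist \<tau> T < e" "dist \<tau> T < e2"
            using e e2 T unfolding \<tau>_def by (auto simp: dist_real_def min_def)
          then have "dist (r \<tau>) (r T) < r T - x" using e by auto
          then have xr: "x \<le> r \<tau>" by (auto simp: dist_real_def)
          then have "(x,\<tau>) \<in> Qclos T r" using tau h unfolding Qclos_def by auto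
          moreover have "dist (x,\<tau>) (x,T) < e2" using tau by (simp add: dist_Pair_Pair)
          ultimately have "dist (V x \<tau>) (V x T) < - V x T" using e2 by auto
          moreover have "V x \<tau> \<ge> 0" using A[of \<tau> x] tau xr h by auto
          ultimately show False by (auto simp: dist_real_def)
        qed
      qed
    qed
  qed
qed
lemma sol_unpack:
  assumes "neumann_sol T h r U" "boundary_fn T r"
  obtains Ux Uxx Ut where
    "continuous_on (Qclos T r) (\<lambda>(x,t). U x t)"
    "\<forall>(x,t)\<in>Qdom T r. ((\<lambda>y. U y t) has_real_derivative Ux x t) (at x) \<and>
            ((\<lambda>y. Ux y t) has_real_derivative Uxx x t) (at x) \<and>
            ((\<lambda>\<tau>. U x \<tau>) has_real_derivative Ut x t) (at t) \<and> Ut x t = Uxx x t"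
    "\<forall>t\<in>{0<..T}. ((\<lambda>y. U y t) has_real_derivative Ux 0 t) (at 0 within {0..r t}) \<and> Ux 0 t = - h t"
    "U 0 0 = 0" "\<forall>t\<in>{0..T}. U (r t) t = 0"
proof -
  from assms(1) obtain Ux Uxx Ut where
    c: "continuous_on (Qclos T r) (\<lambda>(x,t). U x t)" and
    p: "\<forall>(x,t)\<in>Qdom T r. ((\<lambda>y. U y t) has_real_derivative Ux x t) (at x) \<and>
            ((\<lambda>y. Ux y t) has_real_derivative Uxx x t) (at x) \<and>
            ((\<lambda>\<tau>. U x \<tau>) has_real_derivative Ut x t) (at t) \<and> Ut x t = Uxx x t" and
    b: "\<forall>(x,t)\<in>Qclos T r - {(x,t). t = 0}.
            ((\<lambda>y. U y t) has_real_derivative Ux x t) (at x within {0..r t})" and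
    hh: "\<forall>t\<in>{0<..T}. - Ux 0 t = h t" and
    z: "U 0 0 = 0" "\<forall>t\<in>{0..T}. U (r t) t = 0"
    unfolding neumann_sol_def by blast
  have "\<forall>t\<in>{0<..T}. ((\<lambda>y. U y t) has_real_derivative Ux 0 t) (at 0 within {0..r t}) \<and> Ux 0 t = - h t"
  proof
    fix t assume t: "t \<in> {0<..T}"
    then have "r t > 0" using assms(2) unfolding boundary_fn_def by auto
    then have "(0,t) \<in> Qclos T r - {(x,t). t = 0}" using t unfolding Qclos_def by auto
    then show "((\<lambda>y. U y t) has_real_derivative Ux 0 t) (at 0 within {0..r t}) \<and> Ux 0 t = - h t"
      using b hh t by force
  qed
  then show ?thesis using that c p z by blast
qed

lemma Unonneg:
  assumes T: "T > 0" and hp: "\<forall>t\<in>{0..T}. h t > 0" and sol: "neumann_sol T h r U" and bf: "boundary_fn T r"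
  shows "\<forall>x t. 0 \<le> t \<and> t \<le> T \<and> 0 \<le> x \<and> x \<le> r t \<longrightarrow> U x t \<ge> 0"
proof -
  obtain Ux Uxx Ut where u: "continuous_on (Qclos T r) (\<lambda>(x,t). U x t)"
    "\<forall>(x,t)\<in>Qdom T r. ((\<lambda>y. U y t) has_real_derivative Ux x t) (at x) \<and>
            ((\<lambda>y. Ux y t) has_real_derivative Uxx x t) (at x) \<and>
            ((\<lambda>\<tau>. U x \<tau>) has_real_derivative Ut x t) (at t) \<and> Ut x t = Uxx x t"
    "\<forall>t\<in>{0<..T}. ((\<lambda>y. U y t) has_real_derivative Ux 0 t) (at 0 within {0..r t}) \<and> Ux 0 t = - h t"
    "U 0 0 = 0" "\<forall>t\<in>{0..T}. U (r t) t = 0"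
    using sol_unpack[OF sol bf] by blast
  have bd: "\<forall>t\<in>{0<..T}. ((\<lambda>y. U y t) has_real_derivative Ux 0 t) (at 0 within {0..r t}) \<and> Ux 0 t < 0"
    using u(3) hp by fastforce
  have bfu: "continuous_on {0..T} r" "r 0 = 0" "\<forall>t\<in>{0<..T}. r t > 0" using bf unfolding boundary_fn_def by auto
  show ?thesis
    by (rule minprin[OF T bfu u(1) u(2) bd]) (use u(4,5) in auto)
qed
lemma Ucompare:
  assumes T: "T > 0" and hp: "\<forall>t\<in>{0..T}. h t > 0"
    and sol1: "neumann_sol T h r1 U1" and bf1: "boundary_fn T r1"
    and sol2: "neumann_sol T h r2 U2" and bf2: "boundary_fn T r2"
    and le: "\<forall>t\<in>{0..T}. r1 t \<le> r2 t"
  shows "\<forall>x t. 0 \<le> t \<and> t \<le> T \<and> 0 \<le> x \<and> x \<le> r1 t \<longrightarrow> U1 x t \<le> U2 x t"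
proof -
  obtain U1x U1xx U1t where u1: "continuous_on (Qclos T r1) (\<lambda>(x,t). U1 x t)"
    "\<forall>(x,t)\<in>Qdom T r1. ((\<lambda>y. U1 y t) has_real_derivative U1x x t) (at x) \<and>
            ((\<lambda>y. U1x y t) has_real_derivative U1xx x t) (at x) \<and>
            ((\<lambda>\<tau>. U1 x \<tau>) has_real_derivative U1t x t) (at t) \<and> U1t x t = U1xx x t"
    "\<forall>t\<in>{0<..T}. ((\<lambda>y. U1 y t) has_real_derivative U1x 0 t) (at 0 within {0..r1 t}) \<and> U1x 0 t = - h t"
    "U1 0 0 = 0" "\<forall>t\<in>{0..T}. U1 (r1 t) t = 0"
    using sol_unpack[OF sol1 bf1] by blast
  obtain U2x U2xx U2t where u2: "continuous_on (Qclos T r2) (\<lambda>(x,t). U2 x t)"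
    "\<forall>(x,t)\<in>Qdom T r2. ((\<lambda>y. U2 y t) has_real_derivative U2x x t) (at x) \<and>
            ((\<lambda>y. U2x y t) has_real_derivative U2xx x t) (at x) \<and>
            ((\<lambda>\<tau>. U2 x \<tau>) has_real_derivative U2t x t) (at t) \<and> U2t x t = U2xx x t"
    "\<forall>t\<in>{0<..T}. ((\<lambda>y. U2 y t) has_real_derivative U2x 0 t) (at 0 within {0..r2 t}) \<and> U2x 0 t = - h t"
    "U2 0 0 = 0" "\<forall>t\<in>{0..T}. U2 (r2 t) t = 0"
    using sol_unpack[OF sol2 bf2] by blast
  have U2nn: "\<forall>x t. 0 \<le> t \<and> t \<le> T \<and> 0 \<le> x \<and> x \<le> r2 t \<longrightarrow> U2 x t \<ge> 0"
    by (rule Unonneg[OF T hp sol2 bf2])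
  have bfu: "continuous_on {0..T} r1" "r1 0 = 0" "\<forall>t\<in>{0<..T}. r1 t > 0" using bf1 unfolding boundary_fn_def by auto
  obtain tL where tL: "tL \<in> {0..T}" "\<forall>y\<in>{0..T}. r1 y \<le> r1 tL"
    using continuous_attains_sup[of "{0..T}" r1] bfu(1) T by auto
  define L where "L = r1 tL"
  have L: "L \<ge> 0" "\<forall>y\<in>{0..T}. r1 y \<le> L" using tL bfu unfolding L_def
    by (metis atLeastAtMost_iff greaterThanAtMost_iff less_eq_real_def) (use tL L_def in auto)
  have QQ: "Qclos T r1 \<subseteq> Qclos T r2" using le unfolding Qclos_def by (force intro: order_trans)
  have DD: "Qdom T r1 \<subseteq> Qdom T r2" using le unfolding Qdom_def by (force intro: less_le_trans)
  have main: "U2 x t - U1 x t + \<epsilon> * (L - x) \<ge> 0"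
    if e: "\<epsilon> > 0" and xt: "0 \<le> t" "t \<le> T" "0 \<le> x" "x \<le> r1 t" for \<epsilon> x t
  proof -
    define V where "V = (\<lambda>x t. U2 x t - U1 x t + \<epsilon> * (L - x))"
    have Vc: "continuous_on (Qclos T r1) (\<lambda>(x,t). V x t)"
    proof -
      have c2: "continuous_on (Qclos T r1) (\<lambda>p. U2 (fst p) (snd p))"
        using continuous_on_subset[OF u2(1) QQ] by (simp add: case_prod_beta)
      have c1: "continuous_on (Qclos T r1) (\<lambda>p. U1 (fst p) (snd p))"
        using u1(1) by (simp add: case_prod_beta)
      have "continuous_on (Qclos T r1) (\<lambda>p. U2 (fst p) (snd p) - U1 (fst p) (snd p) + \<epsilon> * (L - fst p))"
        by (intro continuous_intros c1 c2)
      then show ?thesis unfolding V_def by (simp add: case_prod_beta)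
    qed
    have pde: "\<forall>(x,t)\<in>Qdom T r1. ((\<lambda>y. V y t) has_real_derivative (\<lambda>x t. U2x x t - U1x x t - \<epsilon>) x t) (at x) \<and>
            ((\<lambda>y. (\<lambda>x t. U2x x t - U1x x t - \<epsilon>) y t) has_real_derivative (\<lambda>x t. U2xx x t - U1xx x t) x t) (at x) \<and>
            ((\<lambda>\<tau>. V x \<tau>) has_real_derivative (\<lambda>x t. U2t x t - U1t x t) x t) (at t) \<and>
            (\<lambda>x t. U2t x t - U1t x t) x t = (\<lambda>x t. U2xx x t - U1xx x t) x t"
    proof (clarify)
      fix x t assume xt: "(x,t) \<in> Qdom T r1"
      then have xt2: "(x,t) \<in> Qdom T r2" using DD by auto
      have d1: "((\<lambda>y. U1 y t) has_real_derivative U1x x t) (at x)"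
            "((\<lambda>y. U1x y t) has_real_derivative U1xx x t) (at x)"
            "((\<lambda>\<tau>. U1 x \<tau>) has_real_derivative U1t x t) (at t)" "U1t x t = U1xx x t"
        using u1(2) xt by auto
      have d2: "((\<lambda>y. U2 y t) has_real_derivative U2x x t) (at x)"
            "((\<lambda>y. U2x y t) has_real_derivative U2xx x t) (at x)"
            "((\<lambda>\<tau>. U2 x \<tau>) has_real_derivative U2t x t) (at t)" "U2t x t = U2xx x t"
        using u2(2) xt2 by auto
      show "((\<lambda>y. V y t) has_real_derivative U2x x t - U1x x t - \<epsilon>) (at x) \<and>
            ((\<lambda>y. U2x y t - U1x y t - \<epsilon>) has_real_derivative U2xx x t - U1xx x t) (at x) \<and>
            ((\<lambda>\<tau>. V x \<tau>) has_real_derivative U2t x t - U1t x t) (at t) \<and>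
            U2t x t - U1t x t = U2xx x t - U1xx x t"
        unfolding V_def using d1 d2 by (auto intro!: derivative_eq_intros)
    qed
    have bd: "\<forall>t\<in>{0<..T}. ((\<lambda>y. V y t) has_real_derivative (\<lambda>t. - \<epsilon>) t) (at 0 within {0..r1 t}) \<and> (\<lambda>t. - \<epsilon>) t < 0"
    proof
      fix t assume t: "t \<in> {0<..T}"
      have s: "{0..r1 t} \<subseteq> {0..r2 t}" using le t by auto
      have a1: "((\<lambda>y. U1 y t) has_real_derivative U1x 0 t) (at 0 within {0..r1 t})" "U1x 0 t = - h t" using bspec[OF u1(3) t] by blast+
      have a2: "((\<lambda>y. U2 y t) has_real_derivative U2x 0 t) (at 0 within {0..r1 t})" "U2x 0 t = - h t"
        using bspec[OF u2(3) t] has_field_derivative_subset[OF _ s] by blast+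
      have "((\<lambda>y. V y t) has_real_derivative U2x 0 t - U1x 0 t - \<epsilon>) (at 0 within {0..r1 t})"
        unfolding V_def using a1(1) a2(1) by (auto intro!: derivative_eq_intros)
      then show "((\<lambda>y. V y t) has_real_derivative - \<epsilon>) (at 0 within {0..r1 t}) \<and> - \<epsilon> < 0"
        using a1(2) a2(2) e by simp
    qed
    have lat: "\<forall>t\<in>{0..T}. V (r1 t) t \<ge> 0"
    proof
      fix t assume t: "t \<in> {0..T}"
      have "r1 t \<ge> 0" using t bfu by (metis atLeastAtMost_iff greaterThanAtMost_iff less_eq_real_def)
      then have "U2 (r1 t) t \<ge> 0" using U2nn le t by auto
      moreover have "\<epsilon> * (L - r1 t) \<ge> 0" using L t e by auto
      ultimately show "V (r1 t) t \<ge> 0" unfolding V_def using u1(5) t by auto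
    qed
    have c00: "V 0 0 \<ge> 0" unfolding V_def using u1(4) u2(4) e L by auto
    have "\<forall>x t. 0 \<le> t \<and> t \<le> T \<and> 0 \<le> x \<and> x \<le> r1 t \<longrightarrow> V x t \<ge> 0"
      by (rule minprin[OF T bfu Vc pde bd lat c00])
    then show ?thesis using xt unfolding V_def by auto
  qed
  show ?thesis
  proof (intro allI impI)
    fix x t assume xt: "0 \<le> t \<and> t \<le> T \<and> 0 \<le> x \<and> x \<le> r1 t"
    show "U1 x t \<le> U2 x t"
    proof (rule ccontr)
      assume "\<not> ?thesis"
      then have d: "U1 x t - U2 x t > 0" by simp
      define \<epsilon> where "\<epsilon> = (U1 x t - U2 x t) / (2 * (L + 1))"
      have ep: "\<epsilon> > 0" using d L unfolding \<epsilon>_def by auto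
      have "\<epsilon> * (L - x) \<le> \<epsilon> * L" using ep xt by (simp add: mult_left_mono)
      also have "\<dots> = (U1 x t - U2 x t) * (L / (2 * (L + 1)))" unfolding \<epsilon>_def by simp
      also have "\<dots> < (U1 x t - U2 x t) * 1"
        apply (rule mult_strict_left_mono) using d L by (auto simp: field_simps)
      finally have "\<epsilon> * (L - x) < U1 x t - U2 x t" by simp
      moreover have "U2 x t - U1 x t + \<epsilon> * (L - x) \<ge> 0" using main[OF ep] xt by auto
      ultimately show False by simp
    qed
  qed
qed
lemma slice_int:
  fixes U :: "real \<Rightarrow> real \<Rightarrow> real" and r :: "real \<Rightarrow> real"
  assumes "continuous_on (Qclos T r) (\<lambda>(x,t). U x t)" "t \<in> {0..T}" "0 \<le> a" "b \<le> r t"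
  shows "(\<lambda>x. U x t) integrable_on {a..b}"
proof -
  have "continuous_on {a..b} ((\<lambda>(x,t). U x t) \<circ> (\<lambda>x. (x,t)))"
    apply (rule continuous_on_compose)
     apply (intro continuous_intros)
    apply (rule continuous_on_subset[OF assms(1)])
    using assms unfolding Qclos_def by auto
  then have "continuous_on {a..b} (\<lambda>x. U x t)" by (simp add: o_def)
  then show ?thesis by (rule Henstock_Kurzweil_Integration.integrable_continuous_interval)
qed

lemma intcompare:
  assumes T: "T > 0" and hp: "\<forall>t\<in>{0..T}. h t > 0"
    and sol1: "neumann_sol T h r1 U1" and bf1: "boundary_fn T r1"
    and sol2: "neumann_sol T h r2 U2" and bf2: "boundary_fn T r2"
    and le: "\<forall>t\<in>{0..T}. r1 t \<le> r2 t" and t: "t \<in> {0..T}"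
  shows "integral {0..r1 t} (\<lambda>x. U1 x t) \<le> integral {0..r2 t} (\<lambda>x. U2 x t)"
proof -
  have cmp: "\<forall>x t. 0 \<le> t \<and> t \<le> T \<and> 0 \<le> x \<and> x \<le> r1 t \<longrightarrow> U1 x t \<le> U2 x t"
    by (rule Ucompare[OF T hp sol1 bf1 sol2 bf2 le])
  have nn: "\<forall>x t. 0 \<le> t \<and> t \<le> T \<and> 0 \<le> x \<and> x \<le> r2 t \<longrightarrow> U2 x t \<ge> 0"
    by (rule Unonneg[OF T hp sol2 bf2])
  have c1: "continuous_on (Qclos T r1) (\<lambda>(x,t). U1 x t)" using sol1 unfolding neumann_sol_def by blast
  have c2: "continuous_on (Qclos T r2) (\<lambda>(x,t). U2 x t)" using sol2 unfolding neumann_sol_def by blast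
  have r1nn: "r1 t \<ge> 0" using bf1 t unfolding boundary_fn_def
    by (metis atLeastAtMost_iff greaterThanAtMost_iff less_eq_real_def)
  have r12: "r1 t \<le> r2 t" using le t by auto
  have i1: "(\<lambda>x. U1 x t) integrable_on {0..r1 t}" by (rule slice_int[OF c1 t]) auto
  have i2: "(\<lambda>x. U2 x t) integrable_on {0..r1 t}" by (rule slice_int[OF c2 t]) (use r12 in auto)
  have i2b: "(\<lambda>x. U2 x t) integrable_on {r1 t..r2 t}" by (rule slice_int[OF c2 t]) (use r1nn in auto)
  have i2a: "(\<lambda>x. U2 x t) integrable_on {0..r2 t}" by (rule slice_int[OF c2 t]) auto
  have "integral {0..r1 t} (\<lambda>x. U1 x t) \<le> integral {0..r1 t} (\<lambda>x. U2 x t)"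
    by (rule integral_le[OF i1 i2]) (use cmp t in auto)
  moreover have "0 \<le> integral {r1 t..r2 t} (\<lambda>x. U2 x t)"
    using integral_le[OF integrable_0 i2b, of ] nn t r1nn r12 by (auto intro: order_trans)
  moreover have "integral {0..r1 t} (\<lambda>x. U2 x t) + integral {r1 t..r2 t} (\<lambda>x. U2 x t) = integral {0..r2 t} (\<lambda>x. U2 x t)"
    by (rule Henstock_Kurzweil_Integration.integral_combine[OF r1nn r12 i2a])
  ultimately show ?thesis by linarith
qed

theorem mainTheorem2:
  fixes T :: real and h :: "real \<Rightarrow> real"
    and U :: "(real \<Rightarrow> real) \<Rightarrow> real \<Rightarrow> real \<Rightarrow> real"
    and sstar s :: "real \<Rightarrow> real"
  assumes "T > 0"
    and "continuous_on {0..T} h" and "\<forall>t\<in>{0..T}. h t > 0"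
    and "\<forall>r. boundary_fn T r \<longrightarrow> neumann_sol T h r (U r)"
    and "boundary_fn T sstar"
    and "\<forall>t\<in>{0..T}. nbu h U sstar t = sstar t"
    and "boundary_fn T s"
  shows "((\<forall>t\<in>{0..T}. s t \<le> sstar t) \<longrightarrow>
           (\<forall>t\<in>{0..T}.
              s t - sstar t \<le> (s t - sstar t) / 2 \<and>
              (s t - sstar t) / 2 \<le> ((1/2) * nbu h U s t + (1/2) * s t) - sstar t \<and>
              ((1/2) * nbu h U s t + (1/2) * s t) - sstar t \<le> (nbu h U s t - sstar t) / 2 \<and>
              (nbu h U s t - sstar t) / 2 \<le> nbu h U s t - sstar t))
       \<and> ((\<forall>t\<in>{0..T}. s t \<ge> sstar t) \<longrightarrow>
           (\<forall>t\<in>{0..T}.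
              s t - sstar t \<ge> (s t - sstar t) / 2 \<and>
              (s t - sstar t) / 2 \<ge> ((1/2) * nbu h U s t + (1/2) * s t) - sstar t \<and>
              ((1/2) * nbu h U s t + (1/2) * s t) - sstar t \<ge> (nbu h U s t - sstar t) / 2 \<and>
              (nbu h U s t - sstar t) / 2 \<ge> nbu h U s t - sstar t))"
proof -
  have solS: "neumann_sol T h s (U s)" and solP: "neumann_sol T h sstar (U sstar)" using assms(4,5,7) by auto
  show ?thesis
  proof (intro conjI impI ballI)
    fix t assume le: "\<forall>t\<in>{0..T}. s t \<le> sstar t" and t: "t \<in> {0..T}"
    have "integral {0..s t} (\<lambda>x. U s x t) \<le> integral {0..sstar t} (\<lambda>x. U sstar x t)"
      by (rule intcompare[OF assms(1,3) solS assms(7) solP assms(5) le t])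
    then have "nbu h U s t \<ge> sstar t" using assms(6) t unfolding nbu_def by force
    moreover have "s t \<le> sstar t" using le t by auto
    ultimately show
      "s t - sstar t \<le> (s t - sstar t) / 2"
      "(s t - sstar t) / 2 \<le> ((1/2) * nbu h U s t + (1/2) * s t) - sstar t"
      "((1/2) * nbu h U s t + (1/2) * s t) - sstar t \<le> (nbu h U s t - sstar t) / 2"
      "(nbu h U s t - sstar t) / 2 \<le> nbu h U s t - sstar t" by simp_all
  next
    fix t assume le: "\<forall>t\<in>{0..T}. s t \<ge> sstar t" and t: "t \<in> {0..T}"
    have "integral {0..sstar t} (\<lambda>x. U sstar x t) \<le> integral {0..s t} (\<lambda>x. U s x t)"
      by (rule intcompare[OF assms(1,3) solP assms(5) solS assms(7) le t])
    then have "nbu h U s t \<le> sstar t" using assms(6) t unfolding nbu_def by force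
    moreover have "s t \<ge> sstar t" using le t by auto
    ultimately show
      "s t - sstar t \<ge> (s t - sstar t) / 2"
      "(s t - sstar t) / 2 \<ge> ((1/2) * nbu h U s t + (1/2) * s t) - sstar t"
      "((1/2) * nbu h U s t + (1/2) * s t) - sstar t \<ge> (nbu h U s t - sstar t) / 2"
      "(nbu h U s t - sstar t) / 2 \<ge> nbu h U s t - sstar t" by simp_all
  qed
qed
end
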